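(* For positive integers $f,d$ with $f\mid d$, we have $R_q(d)\ge R_q(f)$.
   Context: Let $\mathbb{F}_q$ be a finite field. For a positive integer $d$, let $\mathbf{E}_d$ be the elliptic curve $y^2+xy=x^3-t^d$ over $\mathbb{F}_q(t)$ and $R_q(d)$ the rank of the Mordell–Weil group $\mathbf{E}_d(\mathbb{F}_q(t))$. *)

theory Defs
  imports "HOL-Computational_Algebra.Polynomial" "HOL-Computational_Algebra.Fraction_Field"
          "HOL-Library.Extended_Nat"
begin

datatype 'k ecpt = Inf | Pt 'k 'k

text \<open>General Weierstrass equation
  y^2 + a1 x y + a3 y = x^3 + a2 x^2 + a4 x + a6, coefficients given as a 5-tuple.\<close>
type_synonym 'k wcoeffs = "'k \<times> 'k \<times> 'k \<times> 'k \<times> 'k"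

definition on_curve :: "'k::field wcoeffs \<Rightarrow> 'k ecpt \<Rightarrow> bool" where
  "on_curve A P = (case A of (a1, a2, a3, a4, a6) \<Rightarrow>
     (case P of Inf \<Rightarrow> True
      | Pt x y \<Rightarrow> y^2 + a1*x*y + a3*y = x^3 + a2*x^2 + a4*x + a6))"

definition ec_points :: "'k::field wcoeffs \<Rightarrow> 'k ecpt set" where
  "ec_points A = {P. on_curve A P}"

definition ec_neg :: "'k::field wcoeffs \<Rightarrow> 'k ecpt \<Rightarrow> 'k ecpt" where
  "ec_neg A P = (case A of (a1, a2, a3, a4, a6) \<Rightarrow>
     (case P of Inf \<Rightarrow> Inf | Pt x y \<Rightarrow> Pt x (- y - a1*x - a3)))"

text \<open>Chord-and-tangent group law (Silverman, III.2.3), valid in every characteristic.\<close>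
definition ec_add :: "'k::field wcoeffs \<Rightarrow> 'k ecpt \<Rightarrow> 'k ecpt \<Rightarrow> 'k ecpt" where
  "ec_add A P Q = (case A of (a1, a2, a3, a4, a6) \<Rightarrow>
     (case P of Inf \<Rightarrow> Q
      | Pt x1 y1 \<Rightarrow> (case Q of Inf \<Rightarrow> P
        | Pt x2 y2 \<Rightarrow>
           (if x1 = x2 \<and> y1 + y2 + a1*x2 + a3 = 0 then Inf
            else
              let lam = (if x1 = x2
                         then (3*x1^2 + 2*a2*x1 + a4 - a1*y1) / (2*y1 + a1*x1 + a3)
                         else (y2 - y1) / (x2 - x1));
                  nu = (if x1 = x2
                        then (- (x1^3) + a4*x1 + 2*a6 - a3*y1) / (2*y1 + a1*x1 + a3)
                        else (y1*x2 - y2*x1) / (x2 - x1));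
                  x3 = lam^2 + a1*lam - a2 - x1 - x2;
                  y3 = - (lam + a1)*x3 - nu - a3
              in Pt x3 y3))))"

definition ec_mul :: "'k::field wcoeffs \<Rightarrow> int \<Rightarrow> 'k ecpt \<Rightarrow> 'k ecpt" where
  "ec_mul A n P = (if n \<ge> 0 then (ec_add A P ^^ nat n) Inf
                   else ec_neg A ((ec_add A P ^^ nat (- n)) Inf))"

definition ec_lincomb :: "'k::field wcoeffs \<Rightarrow> int list \<Rightarrow> 'k ecpt list \<Rightarrow> 'k ecpt" where
  "ec_lincomb A cs ps = foldr (\<lambda>(c, P) R. ec_add A (ec_mul A c P) R) (zip cs ps) Inf"

definition ec_independent :: "'k::field wcoeffs \<Rightarrow> 'k ecpt list \<Rightarrow> bool" where
  "ec_independent A ps = (distinct ps \<and> set ps \<subseteq> ec_points A \<and>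
     (\<forall>cs. length cs = length ps \<longrightarrow> ec_lincomb A cs ps = Inf \<longrightarrow> (\<forall>c\<in>set cs. c = 0)))"

text \<open>Mordell-Weil rank: maximal size of a Z-independent family of rational points
  (as an extended natural number, so no finiteness is presupposed).\<close>
definition mw_rank :: "'k::field wcoeffs \<Rightarrow> enat" where
  "mw_rank A = (SUP ps \<in> {ps. ec_independent A ps}. enat (length ps))"

definition tvar :: "'a::field poly fract" where
  "tvar = Fract [:0, 1:] 1"

text \<open>E_d : y^2 + x y = x^3 - t^d, i.e. a1 = 1, a2 = a3 = a4 = 0, a6 = - t^d.\<close>
definition E_coeffs :: "nat \<Rightarrow> 'a::field poly fract wcoeffs" where
  "E_coeffs d = (1, 0, 0, 0, - (tvar ^ d))"

text \<open>R_q(d) for the finite field given by the type 'a.\<close>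
definition R :: "'a::{field,finite} itself \<Rightarrow> nat \<Rightarrow> enat" where
  "R _ d = mw_rank (E_coeffs d :: 'a poly fract wcoeffs)"

end

theory Submission imports Defs begin

definition TT :: "nat \<Rightarrow> 'a::field poly" where "TT k = monom 1 (Suc k)"

lemma degTT: "degree (TT k :: 'a::field poly) > 0" by (simp add: TT_def degree_monom_eq)

lift_definition phi :: "nat \<Rightarrow> 'a::field poly fract \<Rightarrow> 'a poly fract"
  is "\<lambda>k x. (pcompose (fst x) (TT k), pcompose (snd x) (TT k))"
proof -
  fix k :: nat and x y :: "'a poly \<times> 'a poly"
  assume "fractrel x y"
  then show "fractrel (pcompose (fst x) (TT k), pcompose (snd x) (TT k)) (pcompose (fst y) (TT k), pcompose (snd y) (TT k))"
    by (auto simp: pcompose_eq_0_iff[OF degTT] simp flip: pcompose_mult)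
qed

lemma phi_Fract: "phi k (Fract a b) = Fract (pcompose a (TT k)) (pcompose b (TT k))"
  by transfer (auto simp: pcompose_eq_0_iff[OF degTT])

lemma phi_add: "phi k (x + y) = phi k x + phi k y"
  by (induct x, induct y) (simp add: phi_Fract pcompose_eq_0_iff[OF degTT] pcompose_add pcompose_mult)
lemma phi_mult: "phi k (x * y) = phi k x * phi k y"
  by (induct x, induct y) (simp add: phi_Fract pcompose_eq_0_iff[OF degTT] pcompose_mult)
lemma phi_uminus: "phi k (- x) = - phi k x"
  by (induct x) (simp add: phi_Fract pcompose_uminus)
lemma phi_inverse: "phi k (inverse x) = inverse (phi k x)"
  by (induct x) (simp add: phi_Fract)
lemma phi_divide: "phi k (x / y) = phi k x / phi k y"
  by (simp add: divide_inverse phi_mult phi_inverse)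
lemma phi_1: "phi k 1 = 1"
  by (simp add: One_fract_def phi_Fract pcompose_1)
lemma phi_0: "phi k 0 = 0"
  by (simp add: Zero_fract_def phi_Fract eq_fract)
lemma phi_inj: "inj (phi k)"
proof (rule injI)
  fix x y assume e: "phi k x = phi k y"
  then show "x = y"
  proof (cases x, cases y)
    fix a b c d assume x: "x = Fract a b" and b: "b \<noteq> 0" and y: "y = Fract c d" and d: "d \<noteq> 0"
    from e x y have "phi k (Fract a b) = phi k (Fract c d)" by simp
    then have "pcompose (a * d - c * b) (TT k) = 0"
      using b d by (simp add: phi_Fract eq_fract pcompose_eq_0_iff[OF degTT] pcompose_mult pcompose_diff)
    then have "a * d = c * b" using pcompose_eq_0[OF _ degTT] by fastforce
    then show "x = y" using b d x y by (simp add: eq_fract)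
  qed
qed

lemma tvar_pow: "(tvar :: 'a::field poly fract) ^ n = Fract (monom 1 n) 1"
  by (induct n) (simp_all add: tvar_def One_fract_def monom_altdef pCons_one)

lemma phi_tvar: "phi k (tvar :: 'a::field poly fract) = tvar ^ Suc k"
  unfolding tvar_pow by (simp add: tvar_def phi_Fract TT_def pcompose_pCons pcompose_1 del: power_Suc)


locale fhom =
  fixes h :: "'k::field \<Rightarrow> 'l::field"
  assumes hadd: "h (x + y) = h x + h y"
    and hmul: "h (x * y) = h x * h y"
    and hneg: "h (- x) = - h x"
    and hdiv: "h (x / y) = h x / h y"
    and h1: "h 1 = 1" and h0: "h 0 = 0"
    and hinj: "inj h"
begin

lemma hdiff: "h (x - y) = h x - h y" using hadd[of x "- y"] hneg[of y] by simp
lemma hpow: "h (x ^ n) = h x ^ n" by (induct n) (simp_all add: h1 hmul)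
lemma hnat: "h (of_nat n) = of_nat n" by (induct n) (simp_all add: h0 h1 hadd)
lemma hnum: "h (numeral n) = numeral n" using hnat[of "numeral n"] by simp
lemma heq: "h x = h y \<longleftrightarrow> x = y" using hinj by (auto dest: injD)
lemma heq0: "h x = 0 \<longleftrightarrow> x = 0" using heq[of x 0] by (simp add: h0)

lemmas fold = hadd[symmetric] hmul[symmetric] hneg[symmetric] hdiv[symmetric] hdiff[symmetric]
  hpow[symmetric] heq heq0

lemma fold_num: "numeral n * h x = h (numeral n * x)" by (simp add: hmul hnum)

fun mpt :: "'k ecpt \<Rightarrow> 'l ecpt" where
  "mpt Inf = Inf" | "mpt (Pt x y) = Pt (h x) (h y)"

definition mA :: "'k wcoeffs \<Rightarrow> 'l wcoeffs" where
  "mA A = (case A of (a1,a2,a3,a4,a6) \<Rightarrow> (h a1, h a2, h a3, h a4, h a6))"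

lemma mpt_inj: "inj mpt"
proof (rule injI)
  fix P Q show "mpt P = mpt Q \<Longrightarrow> P = Q" by (cases P; cases Q) (simp_all add: heq)
qed

lemma mpt_Inf: "mpt P = Inf \<longleftrightarrow> P = Inf" by (cases P) auto

lemma on_curve_m: "on_curve (mA A) (mpt P) \<longleftrightarrow> on_curve A P"
  by (cases A; cases P) (simp_all add: on_curve_def mA_def fold fold_num)

lemma neg_m: "ec_neg (mA A) (mpt P) = mpt (ec_neg A P)"
  by (cases A; cases P) (simp_all add: ec_neg_def mA_def fold fold_num)

lemma mpt_if: "mpt (if c then Inf else Pt X Y) = (if c then Inf else Pt (h X) (h Y))" by simp

lemma hif: "(if c then h a else h b) = h (if c then a else b)" by simp

lemma add_m: "ec_add (mA A) (mpt P) (mpt Q) = mpt (ec_add A P Q)"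
proof (cases A; cases P; cases Q)
  fix a1 a2 a3 a4 a6 x1 y1 x2 y2
  assume "A = (a1,a2,a3,a4,a6)" "P = Pt x1 y1" "Q = Pt x2 y2"
  then show ?thesis
    apply (simp only: ec_add_def mA_def prod.case mpt.simps ecpt.case Let_def)
    apply (simp only: fold fold_num hif)
    apply (simp only: mpt_if)
    done
qed (simp_all add: ec_add_def mA_def)

lemma iter_m: "(ec_add (mA A) (mpt P) ^^ n) Inf = mpt ((ec_add A P ^^ n) Inf)"
  by (induct n) (simp_all add: add_m[symmetric])

lemma mul_m: "ec_mul (mA A) c (mpt P) = mpt (ec_mul A c P)"
  by (simp add: ec_mul_def iter_m neg_m)

lemma lincomb_m: "ec_lincomb (mA A) cs (map mpt ps) = mpt (ec_lincomb A cs ps)"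
proof (induct ps arbitrary: cs)
  case Nil then show ?case by (simp add: ec_lincomb_def)
next
  case (Cons p ps) then show ?case
    by (cases cs) (simp_all add: ec_lincomb_def mul_m add_m[symmetric])
qed

lemma indep_m: "ec_independent A ps \<Longrightarrow> ec_independent (mA A) (map mpt ps)"
  unfolding ec_independent_def
proof (intro conjI allI impI)
  assume a: "distinct ps \<and> set ps \<subseteq> ec_points A \<and>
     (\<forall>cs. length cs = length ps \<longrightarrow> ec_lincomb A cs ps = Inf \<longrightarrow> (\<forall>c\<in>set cs. c = 0))"
  show "distinct (map mpt ps)" using a mpt_inj by (simp add: distinct_map inj_on_def)
  show "set (map mpt ps) \<subseteq> ec_points (mA A)" using a by (auto simp: ec_points_def on_curve_m)
  fix cs assume "length cs = length (map mpt ps)" "ec_lincomb (mA A) cs (map mpt ps) = Inf"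
  then show "\<forall>c\<in>set cs. c = 0" using a by (simp add: lincomb_m mpt_Inf)
qed

lemma rank_m: "mw_rank A \<le> mw_rank (mA A)"
  unfolding mw_rank_def
proof (rule SUP_least)
  fix ps assume "ps \<in> {ps. ec_independent A ps}"
  then have "map mpt ps \<in> {ps. ec_independent (mA A) ps}" by (simp add: indep_m)
  then have "enat (length (map mpt ps)) \<le> (SUP ps \<in> {ps. ec_independent (mA A) ps}. enat (length ps))"
    by (rule SUP_upper)
  then show "enat (length ps) \<le> (SUP ps \<in> {ps. ec_independent (mA A) ps}. enat (length ps))" by simp
qed

end

interpretation ph: fhom "phi k :: 'a::field poly fract \<Rightarrow> 'a poly fract"
  by unfold_locales (simp_all add: phi_add phi_mult phi_uminus phi_divide phi_1 phi_0 phi_inj)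

theorem lemma6:
  fixes f d :: nat
  assumes "0 < f" and "0 < d" and "f dvd d"
  shows "R TYPE('a::{field,finite}) d \<ge> R TYPE('a) f"
proof -
  obtain m where d: "d = f * m" using assms(3) by blast
  with assms have "m > 0" by simp
  then obtain k where m: "m = Suc k" using gr0_conv_Suc by blast
  have tp: "((tvar::'a poly fract) * tvar ^ k) ^ f = tvar ^ d"
    by (simp only: power_Suc[symmetric] power_mult[symmetric] d m mult.commute)
  have "ph.mA k (E_coeffs f :: 'a poly fract wcoeffs) = E_coeffs d"
    by (simp add: ph.mA_def E_coeffs_def phi_1 phi_0 phi_uminus ph.hpow phi_tvar tp)
  then show ?thesis using ph.rank_m[where k=k and A="E_coeffs f :: 'a poly fract wcoeffs"]
    by (simp add: R_def)
qed

end
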